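(* Let $f:[0,1]\to[0,1]$ be a continuous surjective function that does not admit a splitting sequence. If $f$ admits a fixed point $d$ that is S-type, M-type or W-type, then $$\varprojlim f=\varprojlim([0,d],f|_{[0,d]})\cup\varprojlim([d,1],f|_{[d,1]})$$ and $$\varprojlim([0,d],f|_{[0,d]})\cap\varprojlim([d,1],f|_{[d,1]})=\{(d,d,\dots)\}.$$
   Context: $\varprojlim f=\{\mathbf x=(x_0,x_1,\dots)\in[0,1]^{\mathbb N}: f(x_{n+1})=x_n\ \forall n\}$; for a closed interval $J\subseteq[0,1]$, $\varprojlim(J,f|_J)=\{\mathbf x\in\varprojlim f: x_n\in J\ \forall n\}$. Fixed-point types: let $c<d<e$ in $[0,1]$ with $d$ a fixed point, $d$ the only fixed point in $(c,e)$, $c=0$ or $c$ a fixed point, and $e=1$ or $e$ a fixed point. Then $d$ is S-type if $f(x)\le x$ for all $x\in[c,d]$ and $f(x)\ge x$ for all $x\in[d,e]$; N-type if $f(x)\ge x$ on $[c,d]$ and $f(x)\le x$ on $[d,e]$; M-type if $f(x)\ge x$ for all $x\in[c,e]$; W-type if $f(x)\le x$ for all $x\in[c,e]$. (The type is witnessed by $(c,e)$; $d$ has a given type if such $c,e$ exist.) A sequence $(T_n)_{n\in\mathbb N}$ of closed intervals $T_n\subsetneq[0,1]$ (possibly degenerate) is tight if $f(T_{n+1})=T_n$ for every $n$ and $T_n$ is nondegenerate for all sufficiently large $n$. A tight sequence $(T_n)$, $T_n=[l_n,r_n]$, is a splitting sequence admitted by $f$ if there are an infinite set $N\subseteq\mathbb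 N$ and nondegenerate closed intervals $S_n\subseteq[0,1]$ ($n\in N$) with $S_n\cap T_n\subseteq\{l_n,r_n\}$ and $f(S_n)=f(T_n)$ for all $n\in N$. *)

theory Defs
  imports "HOL-Analysis.Analysis"
begin

definition invlim :: "(real \<Rightarrow> real) \<Rightarrow> (nat \<Rightarrow> real) set" where
  "invlim f = {x. (\<forall>n. x n \<in> {0..1}) \<and> (\<forall>n. f (x (Suc n)) = x n)}"

definition invlim_on :: "real set \<Rightarrow> (real \<Rightarrow> real) \<Rightarrow> (nat \<Rightarrow> real) set" where
  "invlim_on J f = {x \<in> invlim f. \<forall>n. x n \<in> J}"

definition fp_frame :: "(real \<Rightarrow> real) \<Rightarrow> real \<Rightarrow> real \<Rightarrow> real \<Rightarrow> bool" where
  "fp_frame f c d e \<longleftrightarrow> 0 \<le> c \<and> c < d \<and> d < e \<and> e \<le> 1 \<and> f d = d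
     \<and> (\<forall>y\<in>{c<..<e}. f y = y \<longrightarrow> y = d)
     \<and> (c = 0 \<or> f c = c) \<and> (e = 1 \<or> f e = e)"

definition S_type :: "(real \<Rightarrow> real) \<Rightarrow> real \<Rightarrow> bool" where
  "S_type f d \<longleftrightarrow> (\<exists>c e. fp_frame f c d e \<and> (\<forall>x\<in>{c..d}. f x \<le> x) \<and> (\<forall>x\<in>{d..e}. f x \<ge> x))"

definition N_type :: "(real \<Rightarrow> real) \<Rightarrow> real \<Rightarrow> bool" where
  "N_type f d \<longleftrightarrow> (\<exists>c e. fp_frame f c d e \<and> (\<forall>x\<in>{c..d}. f x \<ge> x) \<and> (\<forall>x\<in>{d..e}. f x \<le> x))"

definition M_type :: "(real \<Rightarrow> real) \<Rightarrow> real \<Rightarrow> bool" where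
  "M_type f d \<longleftrightarrow> (\<exists>c e. fp_frame f c d e \<and> (\<forall>x\<in>{c..e}. f x \<ge> x))"

definition W_type :: "(real \<Rightarrow> real) \<Rightarrow> real \<Rightarrow> bool" where
  "W_type f d \<longleftrightarrow> (\<exists>c e. fp_frame f c d e \<and> (\<forall>x\<in>{c..e}. f x \<le> x))"

definition tight :: "(real \<Rightarrow> real) \<Rightarrow> (nat \<Rightarrow> real) \<Rightarrow> (nat \<Rightarrow> real) \<Rightarrow> bool" where
  "tight f l r \<longleftrightarrow>
     (\<forall>n. 0 \<le> l n \<and> l n \<le> r n \<and> r n \<le> 1 \<and> {l n..r n} \<noteq> {0..1})
   \<and> (\<forall>n. f ` {l (Suc n)..r (Suc n)} = {l n..r n})
   \<and> (\<exists>M. \<forall>n\<ge>M. l n < r n)"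

definition splitting_sequence :: "(real \<Rightarrow> real) \<Rightarrow> (nat \<Rightarrow> real) \<Rightarrow> (nat \<Rightarrow> real) \<Rightarrow> bool" where
  "splitting_sequence f l r \<longleftrightarrow> tight f l r \<and>
     (\<exists>N::nat set. infinite N \<and> (\<exists>a b :: nat \<Rightarrow> real. \<forall>n\<in>N.
        0 \<le> a n \<and> a n < b n \<and> b n \<le> 1
        \<and> {a n..b n} \<inter> {l n..r n} \<subseteq> {l n, r n}
        \<and> f ` {a n..b n} = f ` {l n..r n}))"

definition admits_splitting_sequence :: "(real \<Rightarrow> real) \<Rightarrow> bool" where
  "admits_splitting_sequence f \<longleftrightarrow> (\<exists>l r. splitting_sequence f l r)"

end

theory Submission
  imports Defs
begin


lemma hit_first:
  fixes f :: "real \<Rightarrow> real"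
  assumes c: "continuous_on {a..b} f" and ab: "a \<le> b" and fa: "f a < v" and fb: "v \<le> f b"
  shows "\<exists>z. a < z \<and> z \<le> b \<and> f z = v \<and> (\<forall>w\<in>{a..<z}. f w < v)"
proof -
  define S where "S = {x \<in> {a..b}. f x = v}"
  have ne: "S \<noteq> {}" using IVT'[of f a v b] fa fb ab c unfolding S_def by force
  have cl: "closed S" unfolding S_def by (rule continuous_closed_preimage_constant[OF c]) simp
  have bb: "bdd_below S" unfolding S_def by (rule bdd_belowI[of _ a]) auto
  define z where "z = Inf S"
  have zS: "z \<in> S" unfolding z_def using closed_contains_Inf[OF ne bb cl] .
  have za: "a < z" using zS fa unfolding S_def by (cases "a = z") auto
  have "\<forall>w\<in>{a..<z}. f w < v"
  proof
    fix w assume w: "w \<in> {a..<z}"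
    show "f w < v"
    proof (rule ccontr)
      assume "\<not> f w < v"
      hence "v \<le> f w" by simp
      moreover have "continuous_on {a..w} f" using c w zS unfolding S_def
        by (auto intro: continuous_on_subset)
      ultimately obtain x where x: "a \<le> x" "x \<le> w" "f x = v" using IVT'[of f a v w] fa w by auto
      hence "x \<in> S" using w zS unfolding S_def by auto
      hence "z \<le> x" unfolding z_def using bb by (simp add: cInf_lower)
      thus False using x w by auto
    qed
  qed
  thus ?thesis using za zS unfolding S_def by auto
qed

lemma sep_pts:
  fixes f :: "real \<Rightarrow> real"
  assumes c: "continuous_on {u..w} f" and uw: "u < w" and fu: "f u = g" and fw: "f w = h" and gh: "g \<noteq> h"
  shows "\<exists>a b. u \<le> a \<and> a < b \<and> b \<le> w \<and> f a = g \<and> f b = h \<and> (\<forall>z\<in>{a<..<b}. f z \<noteq> g \<and> f z \<noteq> h)"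
proof -
  define B where "B = {x \<in> {u..w}. f x = h}"
  have neB: "B \<noteq> {}" using fw uw unfolding B_def by auto
  have clB: "closed B" unfolding B_def by (rule continuous_closed_preimage_constant[OF c]) simp
  have bbB: "bdd_below B" unfolding B_def by (rule bdd_belowI[of _ u]) auto
  define b where "b = Inf B"
  have bB: "b \<in> B" unfolding b_def using closed_contains_Inf[OF neB bbB clB] .
  have ub: "u < b" using bB fu gh unfolding B_def by (cases "u = b") auto
  have cb: "continuous_on {u..b} f" using c bB unfolding B_def by (auto intro: continuous_on_subset)
  define A where "A = {x \<in> {u..b}. f x = g}"
  have "u \<in> A" using fu ub unfolding A_def by auto
  hence neA: "A \<noteq> {}" by blast
  have clA: "closed A" unfolding A_def by (rule continuous_closed_preimage_constant[OF cb]) simp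
  have baA: "bdd_above A" unfolding A_def by (rule bdd_aboveI[of _ b]) auto
  define a where "a = Sup A"
  have aA: "a \<in> A" unfolding a_def using closed_contains_Sup[OF neA baA clA] .
  have ab: "a < b" using aA bB gh unfolding A_def B_def by (cases "a = b") auto
  have "\<forall>z\<in>{a<..<b}. f z \<noteq> g \<and> f z \<noteq> h"
  proof
    fix z assume z: "z \<in> {a<..<b}"
    have zu: "u \<le> z" "z \<le> w" using z aA bB unfolding A_def B_def by auto
    show "f z \<noteq> g \<and> f z \<noteq> h"
    proof
      show "f z \<noteq> g"
      proof
        assume "f z = g"
        hence "z \<in> A" using z zu unfolding A_def by auto
        hence "z \<le> a" unfolding a_def using baA by (simp add: cSup_upper)
        thus False using z by auto
      qed
      show "f z \<noteq> h"
      proof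
        assume "f z = h"
        hence "z \<in> B" using z zu unfolding B_def by auto
        hence "b \<le> z" unfolding b_def using bbB by (simp add: cInf_lower)
        thus False using z by auto
      qed
    qed
  qed
  thus ?thesis using aA bB ab unfolding A_def B_def by auto
qed

lemma sep_image:
  fixes f :: "real \<Rightarrow> real"
  assumes c: "continuous_on {a..b} f" and ab: "a < b" and fa: "f a = g" and fb: "f b = h" and gh: "g \<noteq> h"
    and nz: "\<forall>z\<in>{a<..<b}. f z \<noteq> g \<and> f z \<noteq> h"
  shows "f ` {a..b} = {min g h..max g h}"
proof
  show "{min g h..max g h} \<subseteq> f ` {a..b}"
  proof
    fix v assume v: "v \<in> {min g h..max g h}"
    show "v \<in> f ` {a..b}"
    proof (cases "g \<le> h")
      case True
      then obtain x where "a \<le> x" "x \<le> b" "f x = v" using IVT'[of f a v b] v fa fb ab c by auto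
      thus ?thesis by auto
    next
      case False
      then obtain x where "a \<le> x" "x \<le> b" "f x = v" using IVT2'[of f b v a] v fa fb ab c by auto
      thus ?thesis by auto
    qed
  qed
  show "f ` {a..b} \<subseteq> {min g h..max g h}"
  proof
    fix y assume "y \<in> f ` {a..b}"
    then obtain z where z: "z \<in> {a..b}" "y = f z" by auto
    show "y \<in> {min g h..max g h}"
    proof (cases "z = a \<or> z = b")
      case True thus ?thesis using z fa fb by auto
    next
      case False
      hence zi: "z \<in> {a<..<b}" using z by auto
      have c1: "continuous_on {a..z} f" using c zi by (auto intro: continuous_on_subset)
      have c2: "continuous_on {z..b} f" using c zi by (auto intro: continuous_on_subset)
      have "\<not> f z > max g h"
      proof
        assume hi: "f z > max g h"
        show False
        proof (cases "g \<le> h")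
          case True
          then obtain x where x: "a \<le> x" "x \<le> z" "f x = h" using IVT'[of f a h z] hi fa zi c1 by auto
          hence "x \<noteq> a" "x \<noteq> z" using fa hi True gh nz zi by auto
          thus False using x nz zi by auto
        next
          case False
          then obtain x where x: "z \<le> x" "x \<le> b" "f x = g" using IVT2'[of f b g z] hi fb zi c2 by auto
          hence "x \<noteq> b" "x \<noteq> z" using fb hi False gh nz zi by auto
          thus False using x nz zi by auto
        qed
      qed
      moreover have "\<not> f z < min g h"
      proof
        assume lo: "f z < min g h"
        show False
        proof (cases "g \<le> h")
          case True
          then obtain x where x: "z \<le> x" "x \<le> b" "f x = g" using IVT'[of f z g b] lo fb zi c2 by auto
          hence "x \<noteq> b" "x \<noteq> z" using fb lo True gh nz zi by auto
          thus False using x nz zi by auto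
        next
          case False
          then obtain x where x: "a \<le> x" "x \<le> z" "f x = h" using IVT2'[of f z h a] lo fa zi c1 by auto
          hence "x \<noteq> a" "x \<noteq> z" using fa lo False gh nz zi by auto
          thus False using x nz zi by auto
        qed
      qed
      ultimately show ?thesis using z by auto
    qed
  qed
qed

lemma exact_image:
  fixes f :: "real \<Rightarrow> real"
  assumes c: "continuous_on {p..q} f" and al: "\<alpha> < \<beta>"
    and ai: "\<alpha> \<in> f ` {p..q}" and bi: "\<beta> \<in> f ` {p..q}"
  shows "\<exists>a b. p \<le> a \<and> a < b \<and> b \<le> q \<and> f ` {a..b} = {\<alpha>..\<beta>}"
proof -
  obtain u where u: "u \<in> {p..q}" "f u = \<alpha>" using ai by auto
  obtain w where w: "w \<in> {p..q}" "f w = \<beta>" using bi by auto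
  have "u \<noteq> w" using u w al by auto
  hence "u < w \<or> w < u" by auto
  thus ?thesis
  proof
    assume uw: "u < w"
    have "continuous_on {u..w} f" using c u w by (auto intro: continuous_on_subset)
    then obtain a b where ab: "u \<le> a" "a < b" "b \<le> w" "f a = \<alpha>" "f b = \<beta>"
        "\<forall>z\<in>{a<..<b}. f z \<noteq> \<alpha> \<and> f z \<noteq> \<beta>"
      using sep_pts[of u w f \<alpha> \<beta>] uw u w al by auto
    have "continuous_on {a..b} f" using c u w ab by (auto intro: continuous_on_subset)
    hence "f ` {a..b} = {\<alpha>..\<beta>}" using sep_image[of a b f \<alpha> \<beta>] ab al by auto
    thus ?thesis using ab u w by (intro exI[of _ a] exI[of _ b]) auto
  next
    assume uw: "w < u"
    have "continuous_on {w..u} f" using c u w by (auto intro: continuous_on_subset)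
    then obtain a b where ab: "w \<le> a" "a < b" "b \<le> u" "f a = \<beta>" "f b = \<alpha>"
        "\<forall>z\<in>{a<..<b}. f z \<noteq> \<beta> \<and> f z \<noteq> \<alpha>"
      using sep_pts[of w u f \<beta> \<alpha>] uw u w al by auto
    have "continuous_on {a..b} f" using c u w ab by (auto intro: continuous_on_subset)
    hence "f ` {a..b} = {\<alpha>..\<beta>}" using sep_image[of a b f \<beta> \<alpha>] ab al by auto
    thus ?thesis using ab u w by (intro exI[of _ a] exI[of _ b]) auto
  qed
qed


lemma right_split:
  fixes f :: "real \<Rightarrow> real"
  assumes c: "continuous_on {0..1} f" and d0: "0 \<le> d" and de: "d < e" and e1: "e \<le> 1"
    and fd: "f d = d" and up: "\<forall>z\<in>{d..e}. z \<le> f z" and y: "y \<in> {0..1}"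
    and cr: "(d < y \<and> f y < d) \<or> (y < d \<and> d < f y)"
  shows "admits_splitting_sequence f"
proof -
  define m where "m = (if d < y then y else f y)"
  have dm: "d < m" using cr unfolding m_def by auto
  define t0 where "t0 = (d + min e m) / 2"
  have t0: "d < t0" "t0 < e" "t0 < m" using dm de unfolding t0_def by auto
  define P where "P = (\<lambda>s z. d < z \<and> z \<le> s \<and> f z = s \<and> (\<forall>w\<in>{d..<z}. f w < s))"
  define t where "t = rec_nat t0 (\<lambda>k tk. SOME z. P tk z)"
  have tz: "t 0 = t0" unfolding t_def by simp
  have tS: "t (Suc k) = (SOME z. P (t k) z)" for k unfolding t_def by simp
  have step: "\<exists>z. P s z" if "d < s" "s \<le> t0" for s
  proof -
    have "continuous_on {d..s} f" using c d0 that t0 e1 by (auto intro: continuous_on_subset)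
    moreover have "s \<le> f s" using up that t0 by auto
    ultimately show ?thesis using hit_first[of d s f s] that fd unfolding P_def by auto
  qed
  have inv: "d < t k \<and> t k \<le> t0" for k
  proof (induction k)
    case 0 thus ?case using tz t0 by simp
  next
    case (Suc k)
    have "P (t k) (t (Suc k))" unfolding tS using someI_ex[OF step] Suc by blast
    thus ?case using Suc unfolding P_def by auto
  qed
  have pr: "P (t k) (t (Suc k))" for k unfolding tS using someI_ex[OF step] inv by blast
  have img: "f ` {d..t (Suc k)} = {d..t k}" for k
  proof
    show "f ` {d..t (Suc k)} \<subseteq> {d..t k}"
    proof
      fix v assume "v \<in> f ` {d..t (Suc k)}"
      then obtain w where w: "w \<in> {d..t (Suc k)}" "v = f w" by auto
      have "w \<le> f w" using up w inv[of "Suc k"] t0 by auto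
      moreover have "f w \<le> t k" using pr[of k] w unfolding P_def
        by (cases "w < t (Suc k)") (auto simp: less_imp_le)
      ultimately show "v \<in> {d..t k}" using w by auto
    qed
    show "{d..t k} \<subseteq> f ` {d..t (Suc k)}"
    proof
      fix v assume v: "v \<in> {d..t k}"
      have "continuous_on {d..t (Suc k)} f" using c d0 inv[of "Suc k"] t0 e1
        by (auto intro: continuous_on_subset)
      then obtain x where "d \<le> x" "x \<le> t (Suc k)" "f x = v"
        using IVT'[of f d v "t (Suc k)"] v fd pr[of k] unfolding P_def by auto
      thus "v \<in> f ` {d..t (Suc k)}" by auto
    qed
  qed
  have tl1: "t n < 1" for n using inv[of n] t0 e1 by auto
  have tight: "tight f (\<lambda>n. d) t"
    unfolding tight_def
  proof (intro conjI allI)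
    fix n
    show "0 \<le> d" by fact
    show "d \<le> t n" using inv[of n] by simp
    show "t n \<le> 1" using tl1[of n] by simp
    show "{d..t n} \<noteq> {0..1}"
    proof
      assume "{d..t n} = {0..1}"
      hence "(1::real) \<in> {d..t n}" by simp
      thus False using tl1[of n] by simp
    qed
    show "f ` {d..t (Suc n)} = {d..t n}" by (rule img)
  next
    show "\<exists>M. \<forall>n\<ge>M. d < t n" using inv by blast
  qed
  have ex: "\<exists>a b. 0 \<le> a \<and> a < b \<and> b \<le> 1 \<and> {a..b} \<inter> {d..t (Suc k)} \<subseteq> {d, t (Suc k)}
      \<and> f ` {a..b} = f ` {d..t (Suc k)}" for k
  proof -
    have pk: "P (t k) (t (Suc k))" by (rule pr)
    have dtk: "d < t k" using inv[of k] by simp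
    show ?thesis
    proof (cases "d < y \<and> f y < d")
      case True
      have my: "m = y" using True unfolding m_def by simp
      have le: "t (Suc k) \<le> y" using inv[of "Suc k"] t0 my by simp
      have cc: "continuous_on {t (Suc k)..y} f" using c y inv[of "Suc k"] d0
        by (auto intro: continuous_on_subset)
      have "d \<in> f ` {t (Suc k)..y}"
      proof -
        obtain x where "t (Suc k) \<le> x" "x \<le> y" "f x = d"
          using IVT2'[of f y d "t (Suc k)"] True pk dtk le cc unfolding P_def by auto
        thus ?thesis by auto
      qed
      moreover have "t k \<in> f ` {t (Suc k)..y}" using pk le unfolding P_def by force
      ultimately obtain a b where ab: "t (Suc k) \<le> a" "a < b" "b \<le> y" "f ` {a..b} = {d..t k}"
        using exact_image[OF cc dtk] by blast
      show ?thesis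
        apply (rule exI[of _ a], rule exI[of _ b])
        using ab y inv[of "Suc k"] d0 img[of k] by auto
    next
      case False
      hence F: "y < d" "d < f y" using cr by auto
      have my: "m = f y" using F unfolding m_def by simp
      have cc: "continuous_on {y..d} f" using c y d0 de e1 F
        by (auto intro: continuous_on_subset)
      have "t k \<in> f ` {y..d}"
      proof -
        obtain x where "y \<le> x" "x \<le> d" "f x = t k"
          using IVT2'[of f d "t k" y] F fd dtk inv[of k] t0 my cc by auto
        thus ?thesis by (metis atLeastAtMost_iff imageI)
      qed
      moreover have "d \<in> f ` {y..d}" using fd F by (metis atLeastAtMost_iff imageI less_imp_le order_refl)
      ultimately obtain a b where ab: "y \<le> a" "a < b" "b \<le> d" "f ` {a..b} = {d..t k}"
        using exact_image[OF cc dtk] by blast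
      show ?thesis
        apply (rule exI[of _ a], rule exI[of _ b])
        using ab y inv[of "Suc k"] d0 de e1 img[of k] by auto
    qed
  qed
  obtain A B where AB: "\<forall>k. 0 \<le> A k \<and> A k < B k \<and> B k \<le> 1 \<and> {A k..B k} \<inter> {d..t (Suc k)} \<subseteq> {d, t (Suc k)}
      \<and> f ` {A k..B k} = f ` {d..t (Suc k)}"
    using ex by metis
  have inf: "infinite (range Suc)" by (simp add: range_inj_infinite)
  have all: "\<forall>n\<in>range Suc. 0 \<le> A (n - 1) \<and> A (n - 1) < B (n - 1) \<and> B (n - 1) \<le> 1 \<and>
        {A (n - 1)..B (n - 1)} \<inter> {d..t n} \<subseteq> {d, t n} \<and> f ` {A (n - 1)..B (n - 1)} = f ` {d..t n}"
      using AB by auto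
  have "splitting_sequence f (\<lambda>n. d) t"
    unfolding splitting_sequence_def
    apply (rule conjI[OF tight])
    apply (rule exI[of _ "range Suc"])
    apply (rule conjI[OF inf])
    apply (rule exI[of _ "\<lambda>n. A (n - 1)"])
    apply (rule exI[of _ "\<lambda>n. B (n - 1)"])
    using all by simp
  thus ?thesis unfolding admits_splitting_sequence_def by blast
qed

lemma refl_img:
  fixes f :: "real \<Rightarrow> real" and p q :: real
  shows "f ` {1-q..1-p} = (\<lambda>z. 1 - z) ` ((\<lambda>z. 1 - f (1 - z)) ` {p..q})"
proof -
  have "{1-q..1-p} = (\<lambda>z. 1 - z) ` {p..q}" by simp
  hence "f ` {1-q..1-p} = f ` ((\<lambda>z. 1 - z) ` {p..q})" by simp
  also have "\<dots> = (\<lambda>z. f (1 - z)) ` {p..q}" by (rule image_image)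
  also have "\<dots> = (\<lambda>z. 1 - z) ` ((\<lambda>z. 1 - f (1 - z)) ` {p..q})" by (simp add: image_image)
  finally show ?thesis .
qed

lemma refl_split:
  fixes f :: "real \<Rightarrow> real"
  assumes "splitting_sequence (\<lambda>z. 1 - f (1 - z)) l r"
  shows "splitting_sequence f (\<lambda>n. 1 - r n) (\<lambda>n. 1 - l n)"
proof -
  define g where "g = (\<lambda>z. 1 - f (1 - z))"
  have T: "\<forall>n. 0 \<le> l n \<and> l n \<le> r n \<and> r n \<le> 1 \<and> {l n..r n} \<noteq> {0..1}"
    and I: "\<forall>n. g ` {l (Suc n)..r (Suc n)} = {l n..r n}"
    and M: "\<exists>M. \<forall>n\<ge>M. l n < r n"
    using assms unfolding splitting_sequence_def tight_def g_def by auto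
  obtain N a b where N: "infinite N" and ab: "\<forall>n\<in>N.
        0 \<le> a n \<and> a n < b n \<and> b n \<le> 1
        \<and> {a n..b n} \<inter> {l n..r n} \<subseteq> {l n, r n}
        \<and> g ` {a n..b n} = g ` {l n..r n}"
    using assms unfolding splitting_sequence_def g_def by blast
  have K: "f ` {1-q..1-p} = (\<lambda>z. 1 - z) ` (g ` {p..q})" for p q
    unfolding g_def by (rule refl_img)
  have tight: "tight f (\<lambda>n. 1 - r n) (\<lambda>n. 1 - l n)"
    unfolding tight_def
  proof (intro conjI allI)
    fix n
    show "0 \<le> 1 - r n" "1 - r n \<le> 1 - l n" "1 - l n \<le> 1" using T by auto
    show "{1 - r n..1 - l n} \<noteq> {0..1}"
    proof
      assume "{1 - r n..1 - l n} = {0..1}"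
      moreover have lr: "l n \<le> r n" using T by auto
      ultimately have m: "(0::real) \<in> {1 - r n..1 - l n}" "(1::real) \<in> {1 - r n..1 - l n}"
        "1 - r n \<in> {0..1}" "1 - l n \<in> {0..1}" by auto
      hence "l n = 0" "r n = 1" by auto
      hence "{l n..r n} = {0..1}" by simp
      thus False using T by auto
    qed
    show "f ` {1 - r (Suc n)..1 - l (Suc n)} = {1 - r n..1 - l n}"
    proof -
      have "f ` {1 - r (Suc n)..1 - l (Suc n)} = (\<lambda>z. 1 - z) ` (g ` {l (Suc n)..r (Suc n)})"
        by (rule K)
      also have "\<dots> = (\<lambda>z. 1 - z) ` {l n..r n}" using I by simp
      also have "\<dots> = {1 - r n..1 - l n}" by simp
      finally show ?thesis .
    qed
  next
    show "\<exists>M. \<forall>n\<ge>M. 1 - r n < 1 - l n" using M by auto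
  qed
  have all: "\<forall>n\<in>N. 0 \<le> 1 - b n \<and> 1 - b n < 1 - a n \<and> 1 - a n \<le> 1
        \<and> {1 - b n..1 - a n} \<inter> {1 - r n..1 - l n} \<subseteq> {1 - r n, 1 - l n}
        \<and> f ` {1 - b n..1 - a n} = f ` {1 - r n..1 - l n}"
  proof
    fix n assume n: "n \<in> N"
    have s: "{a n..b n} \<inter> {l n..r n} \<subseteq> {l n, r n}" using ab n by auto
    have "{1 - b n..1 - a n} \<inter> {1 - r n..1 - l n} \<subseteq> {1 - r n, 1 - l n}"
    proof
      fix z assume z: "z \<in> {1 - b n..1 - a n} \<inter> {1 - r n..1 - l n}"
      hence "1 - z \<in> {a n..b n} \<inter> {l n..r n}" by auto
      hence "1 - z \<in> {l n, r n}" using s by blast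
      thus "z \<in> {1 - r n, 1 - l n}" by auto
    qed
    moreover have "f ` {1 - b n..1 - a n} = f ` {1 - r n..1 - l n}"
    proof -
      have "f ` {1 - b n..1 - a n} = (\<lambda>z. 1 - z) ` (g ` {a n..b n})" by (rule K)
      also have "\<dots> = (\<lambda>z. 1 - z) ` (g ` {l n..r n})" using ab n by simp
      also have "\<dots> = f ` {1 - r n..1 - l n}" by (rule K[symmetric])
      finally show ?thesis .
    qed
    ultimately show "0 \<le> 1 - b n \<and> 1 - b n < 1 - a n \<and> 1 - a n \<le> 1
        \<and> {1 - b n..1 - a n} \<inter> {1 - r n..1 - l n} \<subseteq> {1 - r n, 1 - l n}
        \<and> f ` {1 - b n..1 - a n} = f ` {1 - r n..1 - l n}" using ab n by auto
  qed
  show ?thesis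
    unfolding splitting_sequence_def
    apply (rule conjI[OF tight])
    apply (rule exI[of _ N])
    apply (rule conjI[OF N])
    apply (rule exI[of _ "\<lambda>n. 1 - b n"])
    apply (rule exI[of _ "\<lambda>n. 1 - a n"])
    using all by simp
qed

lemma left_split:
  fixes f :: "real \<Rightarrow> real"
  assumes c: "continuous_on {0..1} f" and c0: "0 \<le> c" and cd: "c < d" and d1: "d \<le> 1"
    and fd: "f d = d" and dn: "\<forall>z\<in>{c..d}. f z \<le> z" and y: "y \<in> {0..1}"
    and cr: "(d < y \<and> f y < d) \<or> (y < d \<and> d < f y)"
  shows "admits_splitting_sequence f"
proof -
  define g where "g = (\<lambda>z. 1 - f (1 - z))"
  have cg: "continuous_on {0..1} g"
  proof -
    have "continuous_on {0..1} (\<lambda>z::real. 1 - z)" by (intro continuous_intros)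
    moreover have "(\<lambda>z::real. 1 - z) ` {0..1} \<subseteq> {0..1}" by auto
    ultimately have "continuous_on {0..1} (\<lambda>z. f (1 - z))"
      using continuous_on_compose2[OF c] by blast
    thus ?thesis unfolding g_def by (intro continuous_intros)
  qed
  have "admits_splitting_sequence g"
  proof (rule right_split[OF cg, of "1 - d" "1 - c" "1 - y"])
    show "0 \<le> 1 - d" "1 - d < 1 - c" "1 - c \<le> 1" using c0 cd d1 by auto
    show "g (1 - d) = 1 - d" using fd unfolding g_def by simp
    show "\<forall>z\<in>{1 - d..1 - c}. z \<le> g z"
    proof
      fix z assume "z \<in> {1 - d..1 - c}"
      hence "1 - z \<in> {c..d}" by auto
      hence "f (1 - z) \<le> 1 - z" using dn by blast
      thus "z \<le> g z" unfolding g_def by simp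
    qed
    show "1 - y \<in> {0..1}" using y by auto
    show "(1 - d < 1 - y \<and> g (1 - y) < 1 - d) \<or> (1 - y < 1 - d \<and> 1 - d < g (1 - y))"
      using cr unfolding g_def by auto
  qed
  then obtain l r where "splitting_sequence g l r" unfolding admits_splitting_sequence_def by blast
  hence "splitting_sequence f (\<lambda>n. 1 - r n) (\<lambda>n. 1 - l n)" unfolding g_def by (rule refl_split)
  thus ?thesis unfolding admits_splitting_sequence_def by blast
qed

theorem lemma4p3:
  fixes f :: "real \<Rightarrow> real" and d :: real
  assumes "continuous_on {0..1} f"
    and "f ` {0..1} = {0..1}"
    and "\<not> admits_splitting_sequence f"
    and "d \<in> {0..1}" and "f d = d"
    and "S_type f d \<or> M_type f d \<or> W_type f d"
  shows "invlim f = invlim_on {0..d} f \<union> invlim_on {d..1} f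
    \<and> invlim_on {0..d} f \<inter> invlim_on {d..1} f = {(\<lambda>n. d)}"
proof -
  note c = assms(1) and ns = assms(3) and fd = assms(5)
  have side: "(\<exists>e. d < e \<and> e \<le> 1 \<and> (\<forall>z\<in>{d..e}. z \<le> f z)) \<or>
              (\<exists>c. 0 \<le> c \<and> c < d \<and> (\<forall>z\<in>{c..d}. f z \<le> z))"
  proof -
    have A: "?thesis" if "fp_frame f c d e" "\<forall>z\<in>{d..e}. z \<le> f z" for c e
      using that unfolding fp_frame_def by blast
    have B: "?thesis" if "fp_frame f c d e" "\<forall>z\<in>{c..d}. f z \<le> z" for c e
      using that unfolding fp_frame_def by blast
    from assms(6) show ?thesis
    proof (elim disjE)
      assume "S_type f d" thus ?thesis unfolding S_type_def using A by blast
    next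
      assume "M_type f d"
      then obtain c e where "fp_frame f c d e" "\<forall>x\<in>{c..e}. f x \<ge> x" unfolding M_type_def by blast
      moreover hence "\<forall>z\<in>{d..e}. z \<le> f z" unfolding fp_frame_def by auto
      ultimately show ?thesis using A by blast
    next
      assume "W_type f d"
      then obtain c e where "fp_frame f c d e" "\<forall>x\<in>{c..e}. f x \<le> x" unfolding W_type_def by blast
      moreover hence "\<forall>z\<in>{c..d}. f z \<le> z" unfolding fp_frame_def by auto
      ultimately show ?thesis using B by blast
    qed
  qed
  have d0: "0 \<le> d" "d \<le> 1" using assms(4) by auto
  have nc: "\<not> ((d < y \<and> f y < d) \<or> (y < d \<and> d < f y))" if y: "y \<in> {0..1}" for y
  proof
    assume cr: "(d < y \<and> f y < d) \<or> (y < d \<and> d < f y)"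
    from side show False
    proof
      assume "\<exists>e. d < e \<and> e \<le> 1 \<and> (\<forall>z\<in>{d..e}. z \<le> f z)"
      then obtain e where "d < e" "e \<le> 1" "\<forall>z\<in>{d..e}. z \<le> f z" by blast
      thus False using right_split[OF c d0(1) _ _ fd _ y cr] ns by blast
    next
      assume "\<exists>c. 0 \<le> c \<and> c < d \<and> (\<forall>z\<in>{c..d}. f z \<le> z)"
      then obtain c' where "0 \<le> c'" "c' < d" "\<forall>z\<in>{c'..d}. f z \<le> z" by blast
      thus False using left_split[OF c _ _ d0(2) fd _ y cr] ns by blast
    qed
  qed
  have lo: "f y \<le> d" if "y \<in> {0..1}" "y \<le> d" for y
    using nc[OF that(1)] that fd by (cases "y = d") auto
  have hi: "d \<le> f y" if "y \<in> {0..1}" "d \<le> y" for y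
    using nc[OF that(1)] that fd by (cases "y = d") auto
  have part1: "x \<in> invlim_on {0..d} f \<union> invlim_on {d..1} f" if x: "x \<in> invlim f" for x
  proof -
    have xr: "\<And>n. x n \<in> {0..1}" and xf: "\<And>n. f (x (Suc n)) = x n"
      using x unfolding invlim_def by auto
    have dl: "x k \<le> d" if "x (k + m) \<le> d" for k m
      using that
    proof (induction m)
      case 0 thus ?case by simp
    next
      case (Suc m)
      have "x (k + m) = f (x (Suc (k + m)))" using xf by simp
      also have "\<dots> \<le> d" using lo[OF xr] Suc.prems by simp
      finally show ?case by (rule Suc.IH)
    qed
    have dh: "d \<le> x k" if "d \<le> x (k + m)" for k m
      using that
    proof (induction m)
      case 0 thus ?case by simp
    next
      case (Suc m)
      have "x (k + m) = f (x (Suc (k + m)))" using xf by simp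
      also have "d \<le> \<dots>" using hi[OF xr] Suc.prems by simp
      finally show ?case by (rule Suc.IH)
    qed
    show ?thesis
    proof (rule ccontr)
      assume "x \<notin> invlim_on {0..d} f \<union> invlim_on {d..1} f"
      hence "\<not> (\<forall>n. x n \<le> d)" "\<not> (\<forall>n. d \<le> x n)" using x xr unfolding invlim_on_def by auto
      then obtain i j where i: "d < x i" and j: "x j < d" by (auto simp: not_le)
      show False
      proof (cases "i \<le> j")
        case True
        then obtain m where "j = i + m" using le_Suc_ex by blast
        thus False using dl[of i m] i j by simp
      next
        case False
        then obtain m where "i = j + m" using le_Suc_ex[of j i] by auto
        thus False using dh[of j m] i j by simp
      qed
    qed
  qed
  have "invlim f = invlim_on {0..d} f \<union> invlim_on {d..1} f"
    using part1 unfolding invlim_on_def by blast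
  moreover have "invlim_on {0..d} f \<inter> invlim_on {d..1} f = {(\<lambda>n. d)}"
  proof
    show "invlim_on {0..d} f \<inter> invlim_on {d..1} f \<subseteq> {(\<lambda>n. d)}"
    proof
      fix x assume "x \<in> invlim_on {0..d} f \<inter> invlim_on {d..1} f"
      hence "\<forall>n. x n = d" unfolding invlim_on_def by (auto intro: order.antisym)
      thus "x \<in> {(\<lambda>n. d)}" by auto
    qed
    show "{(\<lambda>n. d)} \<subseteq> invlim_on {0..d} f \<inter> invlim_on {d..1} f"
      using d0 fd unfolding invlim_on_def invlim_def by auto
  qed
  ultimately show ?thesis by blast
qed

end
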